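(* Let $A\in M_n(\mathbb{FT})$ and let $G$ and $H$ be units of $M_n(\mathbb{T})$ which commute with $A$ (under tropical multiplication). Suppose $G$ and $H$ both have maximum cycle mean $0$. Then $G\otimes H$ has maximum cycle mean $0$.
   Context: $\mathbb{FT}$ is $\mathbb{R}$ with $a\oplus b=\max(a,b)$, $a\otimes b=a+b$; $\mathbb{T}=\mathbb{R}\cup\{-\infty\}$ with the obvious extensions. Matrices multiply by $(A\otimes B)_{i,j}=\bigoplus_k A_{i,k}\otimes B_{k,j}$. Units of the monoid $M_n(\mathbb{T})$ are the matrices with exactly one entry different from $-\infty$ in each row and column. For $B\in M_n(\mathbb{T})$, $\Gamma_B$ is the weighted digraph on $\{1,\dots,n\}$ with an edge $j\to i$ of weight $B_{i,j}$ whenever $B_{i,j}\neq-\infty$; the maximum cycle mean of $B$ is the maximum, over all closed paths in $\Gamma_B$, of the arithmetic mean of the edge weights. *)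

theory Defs
  imports "HOL-Analysis.Analysis"
begin

text \<open>Tropical matrices indexed by a finite type 'n (so n = CARD('n)).
  Entries of M_n(T) are extended reals different from +infinity (MInfty plays -infinity);
  entries of M_n(FT) are reals.\<close>

type_synonym 'n tmat = "'n \<Rightarrow> 'n \<Rightarrow> ereal"

definition T_mat :: "'n tmat \<Rightarrow> bool" where
  "T_mat A \<longleftrightarrow> (\<forall>i j. A i j \<noteq> PInfty)"

definition trop_mult :: "('n::finite) tmat \<Rightarrow> 'n tmat \<Rightarrow> 'n tmat" where
  "trop_mult A B = (\<lambda>i j. Max (range (\<lambda>k. A i k + B k j)))"

definition trop_one :: "'n tmat" where
  "trop_one = (\<lambda>i j. if i = j then 0 else MInfty)"

definition FT_embed :: "('n \<Rightarrow> 'n \<Rightarrow> real) \<Rightarrow> 'n tmat" where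
  "FT_embed A = (\<lambda>i j. ereal (A i j))"

definition trop_unit :: "('n::finite) tmat \<Rightarrow> bool" where
  "trop_unit G \<longleftrightarrow> T_mat G \<and>
     (\<exists>H. T_mat H \<and> trop_mult G H = trop_one \<and> trop_mult H G = trop_one)"

text \<open>The maximum cycle mean is the
  supremum (attained, a maximum) of the means; it is -infinity if there is no cycle.\<close>
definition closed_path :: "'n tmat \<Rightarrow> (nat \<Rightarrow> 'n) \<Rightarrow> nat \<Rightarrow> bool" where
  "closed_path B p k \<longleftrightarrow> k \<ge> 1 \<and> p k = p 0 \<and> (\<forall>t<k. B (p (Suc t)) (p t) \<noteq> MInfty)"

definition cycle_means :: "'n tmat \<Rightarrow> real set" where
  "cycle_means B = {(\<Sum>t<k. real_of_ereal (B (p (Suc t)) (p t))) / real k | p k. closed_path B p k}"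

definition max_cycle_mean :: "'n tmat \<Rightarrow> ereal" where
  "max_cycle_mean B = Sup (ereal ` cycle_means B)"

end

theory Submission
  imports Defs
begin

lemma Max_single:
  fixes f :: "'n::finite \<Rightarrow> ereal"
  assumes "\<And>k. k \<noteq> kk \<Longrightarrow> f k = MInfty"
  shows "Max (range f) = f kk"
proof (rule Max_eqI)
  show "finite (range f)" by simp
  show "f kk \<in> range f" by simp
  fix y assume "y \<in> range f"
  then obtain k where "y = f k" by auto
  then show "y \<le> f kk" using assms by (cases "k = kk") auto
qed

lemma Max_attained:
  fixes f :: "'n::finite \<Rightarrow> ereal"
  shows "\<exists>k. Max (range f) = f k"
proof -
  have "Max (range f) \<in> range f" by (rule Max_in) auto
  then show ?thesis by blast
qed

lemma Max_MInfty:
  fixes f :: "'n::finite \<Rightarrow> ereal"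
  assumes "Max (range f) = MInfty"
  shows "f k = MInfty"
proof -
  have "f k \<le> Max (range f)" by (rule Max_ge) auto
  then show ?thesis using assms by simp
qed

lemma unit_struct:
  fixes G :: "'n::finite tmat"
  assumes "trop_unit G"
  shows "\<exists>\<sigma>. bij \<sigma> \<and> (\<forall>i j. G i j \<noteq> MInfty \<longleftrightarrow> j = \<sigma> i)"
proof -
  obtain H where TG: "T_mat G" and TH: "T_mat H" and GH: "trop_mult G H = trop_one"
    and HG: "trop_mult H G = trop_one"
    using assms unfolding trop_unit_def by auto
  have a: "\<exists>k. G i k \<noteq> MInfty \<and> H k i \<noteq> MInfty" for i
  proof -
    obtain k where "trop_mult G H i i = G i k + H k i"
      using Max_attained[of "\<lambda>k. G i k + H k i"] unfolding trop_mult_def by blast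
    then have "G i k + H k i = 0" using GH unfolding trop_one_def by simp
    then have "G i k \<noteq> MInfty \<and> H k i \<noteq> MInfty" by (cases "G i k"; cases "H k i") auto
    then show ?thesis by blast
  qed
  have b: "\<exists>m. H k m \<noteq> MInfty \<and> G m k \<noteq> MInfty" for k
  proof -
    obtain m where "trop_mult H G k k = H k m + G m k"
      using Max_attained[of "\<lambda>m. H k m + G m k"] unfolding trop_mult_def by blast
    then have "H k m + G m k = 0" using HG unfolding trop_one_def by simp
    then have "H k m \<noteq> MInfty \<and> G m k \<noteq> MInfty" by (cases "G m k"; cases "H k m") auto
    then show ?thesis by blast
  qed
  have c: "H k j = MInfty" if "G i k \<noteq> MInfty" "j \<noteq> i" for i j k
  proof -
    have "trop_mult G H i j = MInfty" using GH that unfolding trop_one_def by auto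
    then have "G i k + H k j = MInfty" unfolding trop_mult_def by (rule Max_MInfty[of "\<lambda>k. G i k + H k j"])
    moreover have "G i k \<noteq> PInfty" using TG unfolding T_mat_def by auto
    ultimately show ?thesis using that(1) by (cases "G i k"; cases "H k j") auto
  qed
  have colinj: "i = i'" if "G i k \<noteq> MInfty" "G i' k \<noteq> MInfty" for i i' k
  proof -
    obtain m where m: "H k m \<noteq> MInfty" using b by blast
    have "m = i" using c[OF that(1)] m by blast
    moreover have "m = i'" using c[OF that(2)] m by blast
    ultimately show ?thesis by simp
  qed
  define \<sigma> where "\<sigma> i = (SOME k. G i k \<noteq> MInfty)" for i
  have s: "G i (\<sigma> i) \<noteq> MInfty" for i
    unfolding \<sigma>_def using a by (metis (mono_tags) someI)
  have "inj \<sigma>"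
  proof (rule injI)
    fix x y assume "\<sigma> x = \<sigma> y"
    then show "x = y" using s[of x] s[of y] colinj[of x "\<sigma> x" y] by simp
  qed
  then have "surj \<sigma>" using finite_UNIV_inj_surj[OF finite] by blast
  have "G i j \<noteq> MInfty \<longleftrightarrow> j = \<sigma> i" for i j
  proof
    assume h: "G i j \<noteq> MInfty"
    obtain i' where i': "j = \<sigma> i'" using \<open>surj \<sigma>\<close> by (metis surjD)
    then have "i = i'" using colinj[OF h, of i'] s[of i'] by simp
    then show "j = \<sigma> i" using i' by simp
  qed (use s in simp)
  then show ?thesis using \<open>inj \<sigma>\<close> \<open>surj \<sigma>\<close> by (auto simp: bij_def)
qed

lemma mult_left_mono:
  fixes B X :: "'n::finite tmat"
  assumes "T_mat X" "\<And>i j. B i j \<noteq> MInfty \<longleftrightarrow> j = \<sigma> i" "\<And>i. B i (\<sigma> i) = ereal (b i)"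
  shows "trop_mult B X i j = ereal (b i) + X (\<sigma> i) j"
proof -
  have "Max (range (\<lambda>k. B i k + X k j)) = B i (\<sigma> i) + X (\<sigma> i) j"
  proof (rule Max_single[where kk="\<sigma> i"])
    fix k assume "k \<noteq> \<sigma> i"
    then have "B i k = MInfty" using assms(2) by blast
    moreover have "X k j \<noteq> PInfty" using assms(1) unfolding T_mat_def by auto
    ultimately show "B i k + X k j = MInfty" by simp
  qed
  then show ?thesis unfolding trop_mult_def using assms(3) by simp
qed

lemma mult_right_mono:
  fixes B X :: "'n::finite tmat"
  assumes "T_mat X" "bij \<sigma>" "\<And>i j. B i j \<noteq> MInfty \<longleftrightarrow> j = \<sigma> i" "\<And>i. B i (\<sigma> i) = ereal (b i)"
  shows "trop_mult X B i j = X i (inv \<sigma> j) + ereal (b (inv \<sigma> j))"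
proof -
  have sj: "\<sigma> (inv \<sigma> j) = j" using assms(2) by (simp add: bij_is_surj surj_f_inv_f)
  have "Max (range (\<lambda>k. X i k + B k j)) = X i (inv \<sigma> j) + B (inv \<sigma> j) j"
  proof (rule Max_single[where kk="inv \<sigma> j"])
    fix k assume k: "k \<noteq> inv \<sigma> j"
    have "j \<noteq> \<sigma> k"
    proof
      assume "j = \<sigma> k"
      then have "inv \<sigma> j = k" using assms(2) by (simp add: bij_is_inj)
      then show False using k by simp
    qed
    then have "B k j = MInfty" using assms(3) by blast
    moreover have "X i k \<noteq> PInfty" using assms(1) unfolding T_mat_def by auto
    ultimately show "X i k + B k j = MInfty" by simp
  qed
  then show ?thesis unfolding trop_mult_def using assms(4)[of "inv \<sigma> j"] sj by simp
qed

lemma monomial_mcm: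
  fixes B :: "'n::finite tmat" and \<rho> :: "'n \<Rightarrow> 'n" and w :: "'n \<Rightarrow> real"
    and A :: "'n \<Rightarrow> 'n \<Rightarrow> real"
  assumes bij: "bij \<rho>" and fin: "\<And>i j. B i j \<noteq> MInfty \<longleftrightarrow> j = \<rho> i"
    and val: "\<And>i. B i (\<rho> i) = ereal (w i)"
    and rel: "\<And>i j. w i + A (\<rho> i) (\<rho> j) = A i j + w j"
  shows "max_cycle_mean B = ereal ((\<Sum>i\<in>UNIV. w i) / real CARD('n))"
proof -
  define W where "W = (\<Sum>i\<in>UNIV. w i)"
  define n where "n = real CARD('n)"
  have npos: "n > 0" unfolding n_def by simp
  define F where "F x = (\<Sum>j\<in>UNIV. A x j)" for x
  have step: "n * w x + F (\<rho> x) = F x + W" for x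
  proof -
    have "(\<Sum>j\<in>UNIV. w x + A (\<rho> x) (\<rho> j)) = (\<Sum>j\<in>UNIV. A x j + w j)"
      using rel by simp
    moreover have "(\<Sum>j\<in>UNIV. A (\<rho> x) (\<rho> j)) = F (\<rho> x)"
      unfolding F_def using sum.reindex_bij_betw[of \<rho> UNIV UNIV "\<lambda>j. A (\<rho> x) j"] bij
      by (simp add: bij_def bij_betw_def)
    ultimately show ?thesis unfolding F_def W_def n_def
      by (simp add: sum.distrib)
  qed
  have path: "(\<Sum>t<k. real_of_ereal (B (p (Suc t)) (p t))) = real k * W / n"
    if cp: "closed_path B p k" for p k
  proof -
    have e: "p t = \<rho> (p (Suc t))" if "t < k" for t
      using cp that fin unfolding closed_path_def by metis
    have "(\<Sum>t<k. real_of_ereal (B (p (Suc t)) (p t))) = (\<Sum>t<k. w (p (Suc t)))"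
      by (rule sum.cong) (simp_all add: e val)
    moreover have "n * (\<Sum>t<k. w (p (Suc t))) = real k * W"
    proof -
      have "n * (\<Sum>t<k. w (p (Suc t))) = (\<Sum>t<k. n * w (p (Suc t)))"
        by (simp add: sum_distrib_left)
      also have "\<dots> = (\<Sum>t<k. (F (p (Suc t)) - F (p t)) + W)"
      proof (rule sum.cong)
        fix t assume "t \<in> {..<k}"
        then have "p t = \<rho> (p (Suc t))" using e by simp
        then show "n * w (p (Suc t)) = F (p (Suc t)) - F (p t) + W"
          using step[of "p (Suc t)"] by simp
      qed simp
      also have "\<dots> = (F (p k) - F (p 0)) + real k * W"
        by (simp add: sum.distrib sum_lessThan_telescope[of "\<lambda>t. F (p t)"])
      also have "\<dots> = real k * W" using cp unfolding closed_path_def by simp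
      finally show ?thesis .
    qed
    ultimately show ?thesis using npos by (simp add: field_simps)
  qed
  have means: "cycle_means B \<subseteq> {W / n}"
  proof
    fix x assume "x \<in> cycle_means B"
    then obtain p k where cp: "closed_path B p k"
      and x: "x = (\<Sum>t<k. real_of_ereal (B (p (Suc t)) (p t))) / real k"
      unfolding cycle_means_def by blast
    have "k \<ge> 1" using cp unfolding closed_path_def by simp
    then show "x \<in> {W / n}" using x path[OF cp] by simp
  qed
  obtain y :: 'n where True by simp
  define q where "q t = (inv \<rho> ^^ t) y" for t
  have "\<not> inj q"
  proof
    assume "inj q"
    then have "infinite (range q)" using finite_imageD by blast
    then show False by simp
  qed
  then obtain a b where ab: "q a = q b" "a \<noteq> b" unfolding inj_def by blast
  obtain a b where ab2: "q a = q b" "a < b"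
    using ab by (metis linorder_neqE_nat)
  define p where "p t = q (a + t)" for t
  have rq: "\<rho> (q (Suc s)) = q s" for s
    unfolding q_def using bij by (simp add: bij_is_surj surj_f_inv_f)
  have "closed_path B p (b - a)"
    unfolding closed_path_def
  proof (intro conjI allI impI)
    show "1 \<le> b - a" using ab2 by simp
    show "p (b - a) = p 0" unfolding p_def using ab2 by simp
    fix t assume "t < b - a"
    have "p t = \<rho> (p (Suc t))" unfolding p_def using rq[of "a + t"] by simp
    then show "B (p (Suc t)) (p t) \<noteq> MInfty" using fin by blast
  qed
  then have "(\<Sum>t<b-a. real_of_ereal (B (p (Suc t)) (p t))) / real (b-a) \<in> cycle_means B"
    unfolding cycle_means_def by blast
  then have "cycle_means B \<noteq> {}" by blast
  then have "cycle_means B = {W / n}" using means by (metis subset_singletonD)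
  then show ?thesis unfolding max_cycle_mean_def W_def n_def by simp
qed

lemma unit_data:
  fixes G :: "'n::finite tmat"
  assumes "trop_unit G"
  shows "\<exists>\<sigma> g. bij \<sigma> \<and> (\<forall>i j. G i j \<noteq> MInfty \<longleftrightarrow> j = \<sigma> i) \<and> (\<forall>i. G i (\<sigma> i) = ereal (g i))"
proof -
  obtain \<sigma> where s: "bij \<sigma>" "\<forall>i j. G i j \<noteq> MInfty \<longleftrightarrow> j = \<sigma> i"
    using unit_struct[OF assms] by blast
  have T: "T_mat G" using assms unfolding trop_unit_def by simp
  have "G i (\<sigma> i) = ereal (real_of_ereal (G i (\<sigma> i)))" for i
  proof -
    have "G i (\<sigma> i) \<noteq> MInfty" using s by blast
    moreover have "G i (\<sigma> i) \<noteq> PInfty" using T unfolding T_mat_def by blast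
    ultimately show ?thesis by (cases "G i (\<sigma> i)") auto
  qed
  then show ?thesis using s
    by (intro exI[of _ \<sigma>] exI[of _ "\<lambda>i. real_of_ereal (G i (\<sigma> i))"]) blast
qed

lemma comm_rel:
  fixes G :: "'n::finite tmat" and A :: "'n \<Rightarrow> 'n \<Rightarrow> real"
  assumes "bij \<sigma>" "\<And>i j. G i j \<noteq> MInfty \<longleftrightarrow> j = \<sigma> i" "\<And>i. G i (\<sigma> i) = ereal (g i)"
    and "trop_mult G (FT_embed A) = trop_mult (FT_embed A) G"
  shows "g i + A (\<sigma> i) (\<sigma> j) = A i j + g j"
proof -
  have T: "T_mat (FT_embed A)" unfolding T_mat_def FT_embed_def by simp
  have "trop_mult G (FT_embed A) i (\<sigma> j) = ereal (g i) + ereal (A (\<sigma> i) (\<sigma> j))"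
    using mult_left_mono[OF T, of G \<sigma> g] assms(2,3) unfolding FT_embed_def by simp
  moreover have "trop_mult (FT_embed A) G i (\<sigma> j) = ereal (A i (inv \<sigma> (\<sigma> j))) + ereal (g (inv \<sigma> (\<sigma> j)))"
    using mult_right_mono[OF T assms(1), of G g] assms(2,3) unfolding FT_embed_def by simp
  moreover have "inv \<sigma> (\<sigma> j) = j" using assms(1) by (simp add: bij_is_inj)
  ultimately show ?thesis using assms(4) by simp
qed

theorem lemma7p7:
  fixes A :: "'n::finite \<Rightarrow> 'n \<Rightarrow> real" and G H :: "'n tmat"
  assumes "trop_unit G" and "trop_unit H"
    and "trop_mult G (FT_embed A) = trop_mult (FT_embed A) G"
    and "trop_mult H (FT_embed A) = trop_mult (FT_embed A) H"
    and "max_cycle_mean G = 0" and "max_cycle_mean H = 0"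
  shows "max_cycle_mean (trop_mult G H) = 0"
proof -
  obtain \<sigma> g where sg: "bij \<sigma>" "\<And>i j. G i j \<noteq> MInfty \<longleftrightarrow> j = \<sigma> i" "\<And>i. G i (\<sigma> i) = ereal (g i)"
    using unit_data[OF assms(1)] by blast
  obtain \<tau> h where th: "bij \<tau>" "\<And>i j. H i j \<noteq> MInfty \<longleftrightarrow> j = \<tau> i" "\<And>i. H i (\<tau> i) = ereal (h i)"
    using unit_data[OF assms(2)] by blast
  have rg: "g i + A (\<sigma> i) (\<sigma> j) = A i j + g j" for i j by (rule comm_rel[where \<sigma>=\<sigma> and G=G and g=g and A=A, OF sg assms(3)])
  have rh: "h i + A (\<tau> i) (\<tau> j) = A i j + h j" for i j by (rule comm_rel[where \<sigma>=\<tau> and G=H and g=h and A=A, OF th assms(4)])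
  have n0: "real CARD('n) \<noteq> 0" by simp
  have "ereal ((\<Sum>i\<in>UNIV. g i) / real CARD('n)) = 0"
    using monomial_mcm[where B=G and \<rho>=\<sigma> and w=g and A=A, OF sg rg] assms(5) by simp
  then have Wg: "(\<Sum>i\<in>UNIV. g i) = 0" using n0 by simp
  have "ereal ((\<Sum>i\<in>UNIV. h i) / real CARD('n)) = 0"
    using monomial_mcm[where B=H and \<rho>=\<tau> and w=h and A=A, OF th rh] assms(6) by simp
  then have Wh: "(\<Sum>i\<in>UNIV. h i) = 0" using n0 by simp
  have TH: "T_mat H" using assms(2) unfolding trop_unit_def by simp
  define w where "w i = g i + h (\<sigma> i)" for i
  have GH: "trop_mult G H i j = ereal (g i) + H (\<sigma> i) j" for i j
    by (rule mult_left_mono[OF TH sg(2,3)])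
  have b: "bij (\<tau> \<circ> \<sigma>)" using sg(1) th(1) by (rule bij_comp)
  have f: "trop_mult G H i j \<noteq> MInfty \<longleftrightarrow> j = (\<tau> \<circ> \<sigma>) i" for i j
    using GH th(2)[of "\<sigma> i" j] by (cases "H (\<sigma> i) j") auto
  have v: "trop_mult G H i ((\<tau> \<circ> \<sigma>) i) = ereal (w i)" for i
    using GH th(3)[of "\<sigma> i"] unfolding w_def by simp
  have r: "w i + A ((\<tau> \<circ> \<sigma>) i) ((\<tau> \<circ> \<sigma>) j) = A i j + w j" for i j
    using rg[of i j] rh[of "\<sigma> i" "\<sigma> j"] unfolding w_def by simp
  have "(\<Sum>i\<in>UNIV. w i) = (\<Sum>i\<in>UNIV. g i) + (\<Sum>i\<in>UNIV. h (\<sigma> i))"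
    unfolding w_def by (simp add: sum.distrib)
  also have "(\<Sum>i\<in>UNIV. h (\<sigma> i)) = (\<Sum>i\<in>UNIV. h i)"
    using sum.reindex_bij_betw[of \<sigma> UNIV UNIV h] sg(1) by (simp add: bij_def bij_betw_def)
  finally have "(\<Sum>i\<in>UNIV. w i) = 0" using Wg Wh by simp
  then show ?thesis using monomial_mcm[where B="trop_mult G H" and \<rho>="\<tau> \<circ> \<sigma>" and w=w and A=A, OF b f v r] by (simp add: zero_ereal_def)
qed

end
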